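(* Suppose Assumptions 1–4 hold and $p$ is convex. Let $\mathbf{x}$ be a Cournot candidate and $\mathbf{x}^S$ a social optimum with $p(X)\neq p(X^S)$ (so $X<X^S$ and $p$ is differentiable at $X$), and let $c=|p'(X)|$. Define $$p^0(q)=\begin{cases}-c(q-X)+p(X), & 0\le q\le X,\\ \max\left\{0,\ \dfrac{p(X^S)-p(X)}{X^S-X}(q-X)+p(X)\right\}, & q>X.\end{cases}$$ Consider the modified model with inverse demand $p^0$ and the same cost functions. Then $\mathbf{x}^S$ is socially optimal in the modified model, and the efficiency $\gamma^0(\mathbf{x})$ of $\mathbf{x}$ in the modified model satisfies $\gamma^0(\mathbf{x})\le\gamma(\mathbf{x})$.
   Context: Cournot model: $N$ suppliers, inverse demand $p:[0,\infty)\to[0,\infty)$, supplier $n$ has cost $C_n:[0,\infty)\to[0,\infty)$ and chooses $x_n\ge0$; $X=\sum_n x_n$, $X^S=\sum_n x_n^S$. $\partial_\pm$ denote right/left derivatives; $C_n'(0)$ is the right derivative at $0$. Assumption 1: each $C_n$ is convex, continuous, nondecreasing on $[0,\infty)$, continuously differentiable on $(0,\infty)$, with $C_n(0)=0$. Assumption 2: $p$ is continuous, nonnegative, nonincreasing, $p(0)>0$; its right derivative at $0$ exists and at every $q>0$ its left and right derivatives exist. Assumption 3: there exists $R>0$ such that $p(R)\le\min_n C_n'(0)$. Assumption 4: $p(0)>\min_n C_n'(0)$. Social welfare of $\mathbf{x}\ge0$ under inverse demand $\tilde p$: $\int_0^X \tilde p(q)\,dq-\sum_{n=1}^N C_n(x_n)$;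 a social optimum maximizes it over nonnegative vectors. Efficiency of $\mathbf{x}$: its welfare divided by the optimal welfare (for the respective model). A nonnegative vector $\mathbf{x}$ is a Cournot candidate if for every $n$: $C_n'(x_n)\le p(X)+x_n\,\partial_-p(X)$ whenever $x_n>0$, and $C_n'(x_n)\ge p(X)+x_n\,\partial_+p(X)$. *)

theory Defs
  imports "HOL-Analysis.Analysis"
begin

definition rderiv :: "(real \<Rightarrow> real) \<Rightarrow> real \<Rightarrow> real" where
  "rderiv f x = (THE d. (f has_real_derivative d) (at x within {x..}))"

definition lderiv :: "(real \<Rightarrow> real) \<Rightarrow> real \<Rightarrow> real" where
  "lderiv f x = (THE d. (f has_real_derivative d) (at x within {..x}))"

text \<open>Suppliers are indexed by 0..N-1; production vectors are nat => real.\<close>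
definition nonneg_vec :: "nat \<Rightarrow> (nat \<Rightarrow> real) \<Rightarrow> bool" where
  "nonneg_vec N x \<longleftrightarrow> (\<forall>n<N. 0 \<le> x n)"

definition total :: "nat \<Rightarrow> (nat \<Rightarrow> real) \<Rightarrow> real" where
  "total N x = (\<Sum>n<N. x n)"

definition assm1 :: "nat \<Rightarrow> (nat \<Rightarrow> real \<Rightarrow> real) \<Rightarrow> bool" where
  "assm1 N C \<longleftrightarrow> (\<forall>n<N.
      convex_on {0..} (C n) \<and> continuous_on {0..} (C n) \<and> mono_on {0..} (C n) \<and>
      (\<forall>x>0. C n differentiable at x) \<and> continuous_on {0<..} (deriv (C n)) \<and>
      C n 0 = 0)"

definition assm2 :: "(real \<Rightarrow> real) \<Rightarrow> bool" where
  "assm2 p \<longleftrightarrow> continuous_on {0..} p \<and> (\<forall>q\<ge>0. 0 \<le> p q) \<and>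
      (\<forall>q r. 0 \<le> q \<longrightarrow> q \<le> r \<longrightarrow> p r \<le> p q) \<and> 0 < p 0 \<and>
      (\<exists>d. (p has_real_derivative d) (at 0 within {0..})) \<and>
      (\<forall>q>0. (\<exists>d. (p has_real_derivative d) (at q within {..q})) \<and>
              (\<exists>d. (p has_real_derivative d) (at q within {q..})))"

definition min_mc0 :: "nat \<Rightarrow> (nat \<Rightarrow> real \<Rightarrow> real) \<Rightarrow> real" where
  "min_mc0 N C = Min ((\<lambda>n. rderiv (C n) 0) ` {..<N})"

definition assm3 :: "nat \<Rightarrow> (nat \<Rightarrow> real \<Rightarrow> real) \<Rightarrow> (real \<Rightarrow> real) \<Rightarrow> bool" where
  "assm3 N C p \<longleftrightarrow> (\<exists>R>0. p R \<le> min_mc0 N C)"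

definition assm4 :: "nat \<Rightarrow> (nat \<Rightarrow> real \<Rightarrow> real) \<Rightarrow> (real \<Rightarrow> real) \<Rightarrow> bool" where
  "assm4 N C p \<longleftrightarrow> min_mc0 N C < p 0"

definition welfare :: "nat \<Rightarrow> (nat \<Rightarrow> real \<Rightarrow> real) \<Rightarrow> (real \<Rightarrow> real) \<Rightarrow> (nat \<Rightarrow> real) \<Rightarrow> real" where
  "welfare N C p x = integral {0..total N x} p - (\<Sum>n<N. C n (x n))"

definition social_optimum :: "nat \<Rightarrow> (nat \<Rightarrow> real \<Rightarrow> real) \<Rightarrow> (real \<Rightarrow> real) \<Rightarrow> (nat \<Rightarrow> real) \<Rightarrow> bool" where
  "social_optimum N C p x \<longleftrightarrow> nonneg_vec N x \<and>
      (\<forall>y. nonneg_vec N y \<longrightarrow> welfare N C p y \<le> welfare N C p x)"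

definition opt_welfare :: "nat \<Rightarrow> (nat \<Rightarrow> real \<Rightarrow> real) \<Rightarrow> (real \<Rightarrow> real) \<Rightarrow> real" where
  "opt_welfare N C p = (SUP y\<in>{y. nonneg_vec N y}. welfare N C p y)"

definition efficiency :: "nat \<Rightarrow> (nat \<Rightarrow> real \<Rightarrow> real) \<Rightarrow> (real \<Rightarrow> real) \<Rightarrow> (nat \<Rightarrow> real) \<Rightarrow> real" where
  "efficiency N C p x = welfare N C p x / opt_welfare N C p"

text \<open>Cournot candidate; C_n'(x_n) is the right derivative (= derivative for x_n > 0).\<close>
definition cournot_candidate :: "nat \<Rightarrow> (nat \<Rightarrow> real \<Rightarrow> real) \<Rightarrow> (real \<Rightarrow> real) \<Rightarrow> (nat \<Rightarrow> real) \<Rightarrow> bool" where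
  "cournot_candidate N C p x \<longleftrightarrow> nonneg_vec N x \<and>
     (\<forall>n<N. (0 < x n \<longrightarrow> rderiv (C n) (x n) \<le> p (total N x) + x n * lderiv p (total N x)) \<and>
            p (total N x) + x n * rderiv p (total N x) \<le> rderiv (C n) (x n))"

definition p_mod :: "(real \<Rightarrow> real) \<Rightarrow> real \<Rightarrow> real \<Rightarrow> real \<Rightarrow> real" where
  "p_mod p X XS q =
     (let c = \<bar>deriv p X\<bar> in
      if q \<le> X then - c * (q - X) + p X
      else max 0 ((p XS - p X) / (XS - X) * (q - X) + p X))"

end

theory Submission
  imports Defs
begin

lemma at_le_eq: "at (x::real) within {..x} = at_left x"
  unfolding at_within_def by (rule arg_cong[where f="\<lambda>S. inf (nhds x) (principal S)"]) auto

lemma at_ge_eq: "at (x::real) within {x..} = at_right x"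
  unfolding at_within_def by (rule arg_cong[where f="\<lambda>S. inf (nhds x) (principal S)"]) auto

lemma rderiv_eq: "(f has_real_derivative d) (at x within {x..}) \<Longrightarrow> rderiv f x = d"
  unfolding rderiv_def
  by (rule the_equality) (auto intro: has_field_derivative_unique simp: at_ge_eq)

lemma lderiv_eq: "(f has_real_derivative d) (at x within {..x}) \<Longrightarrow> lderiv f x = d"
  unfolding lderiv_def
  by (rule the_equality) (auto intro: has_field_derivative_unique simp: at_le_eq)

lemma total_upd: "n < N \<Longrightarrow> total N (x(n:=t)) = total N x - x n + t"
proof -
  assume n: "n < N"
  have "total N (x(n:=t)) = t + (\<Sum>i\<in>{..<N}-{n}. x i)"
    unfolding total_def using n by (simp add: sum.remove[of "{..<N}" n])
  also have "\<dots> = total N x - x n + t"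
    unfolding total_def using n by (simp add: sum.remove[of "{..<N}" n])
  finally show ?thesis .
qed

lemma sumC_upd: "n < (N::nat) \<Longrightarrow> (\<Sum>i<N. (C::nat\<Rightarrow>real\<Rightarrow>real) i ((x(n:=t)) i)) = (\<Sum>i<N. C i (x i)) - C n (x n) + C n t"
proof -
  assume n: "n < N"
  have "(\<Sum>i<N. C i ((x(n:=t)) i)) = C n t + (\<Sum>i\<in>{..<N}-{n}. C i (x i))"
    using n by (subst sum.remove[of "{..<N}" n]) (auto intro!: sum.cong)
  also have "\<dots> = (\<Sum>i<N. C i (x i)) - C n (x n) + C n t"
    using n by (simp add: sum.remove[of "{..<N}" n])
  finally show ?thesis .
qed

lemma final_ineq:
  fixes a b w ws :: real
  assumes "0 \<le> a" "0 \<le> b" "0 \<le> w" "w \<le> ws" "0 \<le> ws - a + b"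
  shows "(w - a) / (ws - a + b) \<le> w / ws"
proof (cases "ws = 0")
  case True
  then have "w = 0" using assms by auto
  then show ?thesis using True assms by (simp add: divide_nonpos_nonneg)
next
  case False
  then have ws: "ws > 0" using assms by auto
  show ?thesis
  proof (cases "ws - a + b = 0")
    case True then show ?thesis using ws assms by simp
  next
    case False
    then have d: "ws - a + b > 0" using assms by auto
    have "(w - a) * ws \<le> w * (ws - a + b)"
    proof -
      have "a * (w - ws) \<le> 0" using assms by (simp add: mult_nonneg_nonpos)
      moreover have "0 \<le> w * b" using assms by simp
      ultimately show ?thesis by (simp add: algebra_simps)
    qed
    then show ?thesis using ws d by (simp add: divide_simps)
  qed
qed

lemma foc_lemma:
  fixes c p :: "real \<Rightarrow> real" and s S0 t :: real
  assumes cvx: "convex_on {0..} c" and pc: "continuous_on {0..} p"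
    and s: "0 \<le> s" "s \<le> S0"
    and key: "\<And>t. 0 \<le> t \<Longrightarrow> integral {0..S0 - s + t} p - c t \<le> integral {0..S0} p - c s"
    and t: "0 \<le> t"
  shows "p S0 * (t - s) \<le> c t - c s"
proof (rule ccontr)
  assume neg: "\<not> p S0 * (t - s) \<le> c t - c s"
  have S0: "S0 \<in> {0..}" using s by simp
  have intg: "\<And>a b. 0 \<le> a \<Longrightarrow> p integrable_on {a..b}"
    by (rule integrable_continuous_real, rule continuous_on_subset[OF pc]) auto
  consider "t > s" | "t < s" using neg by fastforce
  then show False
  proof cases
    case 1
    define k where "k = (c t - c s) / (t - s)"
    have kl: "k < p S0" using neg 1 unfolding k_def by (simp add: divide_simps mult.commute)
    define e where "e = (p S0 - k) / 2"
    have e: "e > 0" using kl unfolding e_def by simp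
    obtain d where d: "d > 0" "\<And>u. u \<in> {0..} \<Longrightarrow> dist u S0 < d \<Longrightarrow> dist (p u) (p S0) < e"
      using pc S0 e unfolding continuous_on_iff by metis
    define h where "h = min (d/2) (t - s)"
    have h: "h > 0" "h \<le> t - s" "h < d" using d 1 unfolding h_def by auto
    have cv: "convex_on {s..t} c" by (rule convex_on_subset[OF cvx]) (use s in auto)
    have "c (s + h) \<le> (c t - c s) / (t - s) * (s + h - s) + c s"
      using convex_onD_Icc'[OF cv, of "s+h"] h by simp
    then have c1: "c (s + h) - c s \<le> h * k" unfolding k_def by (simp add: mult.commute)
    have "integral {S0..S0+h} (\<lambda>_. p S0 - e) \<le> integral {S0..S0+h} p"
    proof (rule integral_le)
      show "p integrable_on {S0..S0 + h}" using intg s by simp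
      fix u assume u: "u \<in> {S0..S0+h}"
      then have "dist (p u) (p S0) < e" using d(2)[of u] h s by (auto simp: dist_real_def)
      then show "p S0 - e \<le> p u" by (auto simp: dist_real_def)
    qed (rule integrable_const_ivl)
    then have i1: "h * (p S0 - e) \<le> integral {S0..S0+h} p" using h by simp
    have "integral {0..S0} p + integral {S0..S0+h} p = integral {0..S0+h} p"
      by (rule Henstock_Kurzweil_Integration.integral_combine) (use s h intg in auto)
    moreover have "integral {0..S0 - s + (s+h)} p - c (s+h) \<le> integral {0..S0} p - c s"
      by (rule key) (use s h in auto)
    ultimately have "integral {S0..S0+h} p \<le> c (s+h) - c s" by simp
    with i1 c1 have "h * (p S0 - e) \<le> h * k" by linarith
    then have "p S0 - e \<le> k" using h by simp
    then show False using kl unfolding e_def by (simp add: field_simps)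
  next
    case 2
    define k where "k = (c s - c t) / (s - t)"
    have kl: "k > p S0" using neg 2 unfolding k_def by (simp add: divide_simps mult.commute algebra_simps)
    define e where "e = (k - p S0) / 2"
    have e: "e > 0" using kl unfolding e_def by simp
    obtain d where d: "d > 0" "\<And>u. u \<in> {0..} \<Longrightarrow> dist u S0 < d \<Longrightarrow> dist (p u) (p S0) < e"
      using pc S0 e unfolding continuous_on_iff by metis
    define h where "h = min (d/2) (s - t)"
    have h: "h > 0" "h \<le> s - t" "h < d" using d 2 unfolding h_def by auto
    have cv: "convex_on {t..s} c" by (rule convex_on_subset[OF cvx]) (use t in auto)
    have "c (s - h) \<le> (c t - c s) / (s - t) * (s - (s - h)) + c s"
      using convex_onD_Icc''[OF cv, of "s-h"] h by simp
    moreover have "(c t - c s) / (s - t) = - k" unfolding k_def by (simp add: minus_divide_left)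
    ultimately have c1: "c s - c (s - h) \<ge> h * k" by (simp add: algebra_simps)
    have "integral {S0-h..S0} p \<le> integral {S0-h..S0} (\<lambda>_. p S0 + e)"
    proof (rule integral_le)
      show "p integrable_on {S0-h..S0}" using intg s h t by simp
      fix u assume u: "u \<in> {S0-h..S0}"
      then have "dist (p u) (p S0) < e" using d(2)[of u] h s t by (auto simp: dist_real_def)
      then show "p u \<le> p S0 + e" by (auto simp: dist_real_def)
    qed (rule integrable_const_ivl)
    then have i1: "integral {S0-h..S0} p \<le> h * (p S0 + e)" using h by simp
    have "integral {0..S0-h} p + integral {S0-h..S0} p = integral {0..S0} p"
      by (rule Henstock_Kurzweil_Integration.integral_combine) (use s h t intg in auto)
    moreover have "integral {0..S0 - s + (s-h)} p - c (s-h) \<le> integral {0..S0} p - c s"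
      by (rule key) (use s h t in auto)
    ultimately have "c s - c (s-h) \<le> integral {S0-h..S0} p" by simp
    with i1 c1 have "h * k \<le> h * (p S0 + e)" by linarith
    then have "k \<le> p S0 + e" using h by simp
    then show False using kl unfolding e_def by (simp add: field_simps)
  qed
qed

lemma convex_diff_at:
  fixes p :: "real \<Rightarrow> real"
  assumes cvx: "convex_on {0..} p" and X: "X > 0"
    and mono: "\<And>q r. 0 \<le> q \<Longrightarrow> q \<le> r \<Longrightarrow> p r \<le> p q"
    and dl: "(p has_real_derivative dl) (at X within {..X})"
    and dr: "(p has_real_derivative dr) (at X within {X..})"
    and drl: "dr \<le> dl"
  shows "(p has_real_derivative dl) (at X)" "dl \<le> 0" "\<And>q. 0 \<le> q \<Longrightarrow> q \<le> X \<Longrightarrow> p X + dl * (q - X) \<le> p q"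
proof -
  define g where "g y = (p y - p X) / (y - X)" for y
  have gl: "(g \<longlongrightarrow> dl) (at_left X)"
    using dl unfolding has_field_derivative_iff at_le_eq g_def .
  have gr: "(g \<longlongrightarrow> dr) (at_right X)"
    using dr unfolding has_field_derivative_iff at_ge_eq g_def .
  have s1: "g y \<le> g z" if "0 \<le> y" "y < X" "X < z" for y z
  proof -
    have "(p y - p X) / (y - X) \<le> (p y - p z) / (y - z)"
         "(p y - p z) / (y - z) \<le> (p X - p z) / (X - z)"
      using convex_on_slope_le[OF cvx, of y z X] that by auto
    moreover have "(p X - p z) / (X - z) = g z" unfolding g_def
      by (metis minus_diff_eq minus_divide_divide)
    ultimately show ?thesis unfolding g_def by linarith
  qed
  have s2: "g q \<le> g y" if "0 \<le> q" "q < y" "y < X" for q y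
  proof -
    have "(p q - p y) / (q - y) \<le> (p q - p X) / (q - X)"
         "(p q - p X) / (q - X) \<le> (p y - p X) / (y - X)"
      using convex_on_slope_le[OF cvx, of q X y] that by auto
    then show ?thesis unfolding g_def by linarith
  qed
  have le1: "dl \<le> g z" if "X < z" for z
  proof (rule tendsto_upperbound[OF gl])
    show "\<forall>\<^sub>F y in at_left X. g y \<le> g z"
      using X by (subst eventually_at_left[of 0]) (auto intro!: exI[of _ 0] s1 that)
  qed simp
  have "dl \<le> dr"
    by (rule tendsto_lowerbound[OF gr]) (auto intro: le1 eventually_mono[OF eventually_at_right_less])
  then have eq: "dr = dl" using drl by simp
  have "(g \<longlongrightarrow> dl) (at X within ({..X} \<union> {X..}))"
    unfolding at_within_union at_le_eq at_ge_eq using gl gr eq by (auto intro: filterlim_sup)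
  moreover have "{..X} \<union> {X..} = UNIV" by auto
  ultimately show "(p has_real_derivative dl) (at X)"
    unfolding has_field_derivative_iff g_def by simp
  show "dl \<le> 0"
  proof (rule tendsto_upperbound[OF gl])
    show "\<forall>\<^sub>F y in at_left X. g y \<le> 0"
      using X by (subst eventually_at_left[of 0])
        (auto intro!: exI[of _ 0] simp: g_def divide_nonneg_neg mono)
  qed simp
  fix q assume q: "0 \<le> q" "q \<le> X"
  show "p X + dl * (q - X) \<le> p q"
  proof (cases "q = X")
    case False
    then have qX: "q < X" using q by simp
    have "g q \<le> dl"
    proof (rule tendsto_lowerbound[OF gl])
      show "\<forall>\<^sub>F y in at_left X. g q \<le> g y"
        using qX by (subst eventually_at_left[of q]) (auto intro!: exI[of _ q] s2 q)
    qed simp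
    then have "(p q - p X) / (q - X) \<le> dl" unfolding g_def .
    then have "dl * (q - X) \<le> p q - p X" using qX by (simp add: divide_le_eq)
    then show ?thesis by simp
  qed simp
qed

lemma pm_le: "q \<le> X \<Longrightarrow> p_mod p X XS q = - \<bar>deriv p X\<bar> * (q - X) + p X"
  by (simp add: p_mod_def)

lemma pm_gt: "X < q \<Longrightarrow> p_mod p X XS q = max 0 ((p XS - p X) / (XS - X) * (q - X) + p X)"
  by (simp add: p_mod_def)

lemma pm_cont:
  assumes "0 \<le> p X"
  shows "continuous_on UNIV (p_mod p X XS)"
proof -
  define sl where "sl = (p XS - p X) / (XS - X)"
  have e: "p_mod p X XS = (\<lambda>q. if (\<lambda>x. x) q \<le> X then - \<bar>deriv p X\<bar> * (q - X) + p X
      else max 0 (sl * (q - X) + p X))"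
    by (rule ext) (simp add: p_mod_def sl_def)
  show ?thesis unfolding e
    by (rule continuous_on_cases_le) (use assms in \<open>auto intro!: continuous_intros\<close>)
qed

lemma welfare_zero:
  assumes "\<And>n. n < N \<Longrightarrow> C n 0 = 0"
  shows "welfare N C q (\<lambda>_. 0) = 0"
  using assms by (simp add: welfare_def total_def)

theorem proposition9:
  fixes N :: nat and C :: "nat \<Rightarrow> real \<Rightarrow> real" and p :: "real \<Rightarrow> real"
    and x xS :: "nat \<Rightarrow> real"
  assumes "0 < N"
    and "assm1 N C" and "assm2 p" and "assm3 N C p" and "assm4 N C p"
    and "convex_on {0..} p"
    and "cournot_candidate N C p x"
    and "social_optimum N C p xS"
    and "p (total N x) \<noteq> p (total N xS)"
  shows "social_optimum N C (p_mod p (total N x) (total N xS)) xS \<and>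
         efficiency N C (p_mod p (total N x) (total N xS)) x \<le> efficiency N C p x"
proof -
  define X where "X = total N x"
  define XS where "XS = total N xS"
  define P where "P = p X"
  define PS where "PS = p XS"
  have cvx: "\<And>n. n < N \<Longrightarrow> convex_on {0..} (C n)"
    and C0: "\<And>n. n < N \<Longrightarrow> C n 0 = 0"
    and Cd: "\<And>n z. n < N \<Longrightarrow> 0 < z \<Longrightarrow> C n differentiable at z"
    using assms(2) unfolding assm1_def by auto
  have pc: "continuous_on {0..} p" and pnn: "\<And>q. 0 \<le> q \<Longrightarrow> 0 \<le> p q"
    and pmono: "\<And>q r. 0 \<le> q \<Longrightarrow> q \<le> r \<Longrightarrow> p r \<le> p q"
    and pd: "\<And>q. q > 0 \<Longrightarrow> (\<exists>d. (p has_real_derivative d) (at q within {..q})) \<and>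
              (\<exists>d. (p has_real_derivative d) (at q within {q..}))"
    using assms(3) unfolding assm2_def by auto
  have intg: "\<And>a b. 0 \<le> a \<Longrightarrow> p integrable_on {a..b}"
    by (rule integrable_continuous_real, rule continuous_on_subset[OF pc]) auto
  have cand: "\<And>n. n < N \<Longrightarrow> (0 < x n \<longrightarrow> rderiv (C n) (x n) \<le> P + x n * lderiv p X) \<and>
            P + x n * rderiv p X \<le> rderiv (C n) (x n)"
    using assms(7) unfolding cournot_candidate_def P_def X_def by auto
  have xnn: "\<And>n. n < N \<Longrightarrow> 0 \<le> x n"
    using assms(7) unfolding cournot_candidate_def nonneg_vec_def by auto
  have so: "nonneg_vec N xS" "\<And>y. nonneg_vec N y \<Longrightarrow> welfare N C p y \<le> welfare N C p xS"
    using assms(8) unfolding social_optimum_def by auto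
  have xSnn: "\<And>n. n < N \<Longrightarrow> 0 \<le> xS n" using so(1) unfolding nonneg_vec_def by auto
  have X0: "0 \<le> X" unfolding X_def total_def by (rule sum_nonneg) (simp add: xnn)
  have XS0: "0 \<le> XS" unfolding XS_def total_def by (rule sum_nonneg) (simp add: xSnn)
  have xle: "\<And>n. n < N \<Longrightarrow> x n \<le> X"
    unfolding X_def total_def by (rule member_le_sum) (auto simp: xnn)
  have xSle: "\<And>n. n < N \<Longrightarrow> xS n \<le> XS"
    unfolding XS_def total_def by (rule member_le_sum) (auto simp: xSnn)
  have PSP: "P \<noteq> PS" using assms(9) unfolding P_def PS_def X_def XS_def .
  have foc: "PS * (t - xS n) \<le> C n t - C n (xS n)" if n: "n < N" and t: "0 \<le> t" for n t
    unfolding PS_def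
  proof (rule foc_lemma[OF cvx[OF n] pc])
    show "0 \<le> xS n" "xS n \<le> XS" using n xSnn xSle by auto
    show "0 \<le> t" by (rule t)
    fix t :: real assume t: "0 \<le> t"
    have "nonneg_vec N (xS(n:=t))" using so(1) t unfolding nonneg_vec_def by auto
    then have "welfare N C p (xS(n:=t)) \<le> welfare N C p xS" by (rule so(2))
    then show "integral {0..XS - xS n + t} p - C n t \<le> integral {0..XS} p - C n (xS n)"
      unfolding welfare_def total_upd[OF n] sumC_upd[OF n] XS_def by simp
  qed
  have Xpos: "X > 0"
  proof -
    have "X \<noteq> 0"
    proof
      assume X: "X = 0"
      have x0: "\<forall>n\<in>{..<N}. x n = 0"
        using X sum_nonneg_eq_0_iff[of "{..<N}" x] xnn unfolding X_def total_def by auto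
      have "min_mc0 N C \<in> (\<lambda>n. rderiv (C n) 0) ` {..<N}"
        unfolding min_mc0_def by (rule Min_in) (use assms(1) in auto)
      then obtain n where n: "n < N" "rderiv (C n) 0 = min_mc0 N C" by auto
      have "P \<le> rderiv (C n) 0" using cand[OF n(1)] x0 n(1) by auto
      moreover have "min_mc0 N C < P" using assms(5) X unfolding assm4_def P_def by simp
      ultimately show False using n by simp
    qed
    then show ?thesis using X0 by simp
  qed
  obtain m where m: "m < N" "0 < x m"
  proof (rule ccontr)
    assume "\<not> thesis"
    then have "\<forall>n<N. x n \<le> 0" using that by (meson not_less)
    then have "X \<le> 0" unfolding X_def total_def by (intro sum_nonpos) auto
    then show False using Xpos by simp
  qed
  obtain dl dr where dl: "(p has_real_derivative dl) (at X within {..X})"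
    and dr: "(p has_real_derivative dr) (at X within {X..})"
    using pd[OF Xpos] by blast
  have ld: "lderiv p X = dl" by (rule lderiv_eq[OF dl])
  have rd: "rderiv p X = dr" by (rule rderiv_eq[OF dr])
  have Cder: "(C n has_real_derivative rderiv (C n) z) (at z)" if "n < N" "0 < z" for n z
  proof -
    have "(C n has_real_derivative deriv (C n) z) (at z)"
      using Cd[OF that] by (simp add: DERIV_deriv_iff_real_differentiable)
    moreover from this have "rderiv (C n) z = deriv (C n) z"
      by (intro rderiv_eq, rule has_field_derivative_at_within)
    ultimately show ?thesis by simp
  qed
  have ctan: "rderiv (C n) (x n) * (z - x n) \<le> C n z - C n (x n)"
    if n: "n < N" and xn: "0 < x n" and z: "0 \<le> z" for n z
  proof (rule convex_on_imp_above_tangent[OF cvx[OF n]])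
    show "connected {0::real..}" by (simp add: is_interval_connected)
    show "x n \<in> interior {0..}" using xn by simp
    show "z \<in> {0..}" using z by simp
    show "(C n has_real_derivative rderiv (C n) (x n)) (at (x n) within {0..})"
      using Cder[OF n xn] by (rule has_field_derivative_at_within)
  qed
  have "rderiv (C m) (x m) \<le> P + x m * dl" "P + x m * dr \<le> rderiv (C m) (x m)"
    using cand[OF m(1)] m(2) unfolding ld rd by auto
  then have "x m * dr \<le> x m * dl" by linarith
  then have drl: "dr \<le> dl" using m(2) by simp
  have pder: "(p has_real_derivative dl) (at X)" and dlnp: "dl \<le> 0"
    and ptan: "\<And>q. 0 \<le> q \<Longrightarrow> q \<le> X \<Longrightarrow> P + dl * (q - X) \<le> p q"
    using convex_diff_at[OF assms(6) Xpos pmono dl dr drl] unfolding P_def by auto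
  have derX: "deriv p X = dl" using pder by (rule DERIV_imp_deriv)
  have DleP: "rderiv (C n) (x n) \<le> P" if n: "n < N" and xn: "0 < x n" for n
  proof -
    have "x n * dl \<le> 0" using xn dlnp by (simp add: mult_nonneg_nonpos)
    then show ?thesis using cand[OF n] xn unfolding ld by auto
  qed
  have XXS: "X < XS"
  proof (rule ccontr)
    assume "\<not> X < XS"
    then have XSX: "XS \<le> X" by simp
    have PPS: "P \<le> PS" unfolding P_def PS_def by (rule pmono[OF XS0 XSX])
    obtain n where n: "n < N" "xS n < x n"
    proof (rule ccontr)
      assume "\<not> thesis"
      then have "\<forall>n<N. x n \<le> xS n" using that by (meson not_less)
      then have "X \<le> XS" unfolding X_def XS_def total_def by (intro sum_mono) auto
      then have "X = XS" using XSX by simp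
      then show False using PSP unfolding P_def PS_def by simp
    qed
    have xn: "0 < x n" using n xSnn[OF n(1)] by linarith
    have f1: "PS * (x n - xS n) \<le> C n (x n) - C n (xS n)" using foc[OF n(1)] xnn[OF n(1)] by simp
    have f2: "rderiv (C n) (x n) * (xS n - x n) \<le> C n (xS n) - C n (x n)"
      using ctan[OF n(1) xn xSnn[OF n(1)]] .
    have "PS * (x n - xS n) \<le> rderiv (C n) (x n) * (x n - xS n)"
      using f1 f2 by (simp add: algebra_simps)
    then have "PS \<le> rderiv (C n) (x n)" using n by simp
    then have "PS \<le> P" using DleP[OF n(1) xn] by simp
    then show False using PPS PSP by simp
  qed
  have PSleP: "PS \<le> P" unfolding P_def PS_def by (rule pmono[OF X0]) (use XXS in simp)
  have PSlt: "PS < P" using PSleP PSP by simp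
  have P0: "0 \<le> P" unfolding P_def by (rule pnn[OF X0])
  have PS0: "0 \<le> PS" unfolding PS_def by (rule pnn[OF XS0])
  define p0 where "p0 = p_mod p X XS"
  define sl where "sl = (PS - P) / (XS - X)"
  have sl: "sl \<le> 0" unfolding sl_def using PSleP XXS by (simp add: divide_nonpos_pos)
  have p0a: "\<And>q. q \<le> X \<Longrightarrow> p0 q = P + dl * (q - X)"
    unfolding p0_def by (simp add: pm_le derX P_def abs_of_nonpos[OF dlnp])
  have p0b: "\<And>q. X < q \<Longrightarrow> p0 q = max 0 (sl * (q - X) + P)"
    unfolding p0_def by (simp add: pm_gt sl_def P_def PS_def)
  have slXS: "sl * (XS - X) = PS - P" unfolding sl_def using XXS by simp
  have p0XS: "p0 XS = PS" using p0b[OF XXS] slXS PS0 by simp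
  have p0_le_p: "p0 q \<le> p q" if "0 \<le> q" "q \<le> X" for q
    using p0a[OF that(2)] ptan[OF that] by simp
  have p_le_p0: "p q \<le> p0 q" if q: "X \<le> q" "q \<le> XS" for q
  proof (cases "q = X")
    case True then show ?thesis using p0a[of q] P_def by simp
  next
    case False
    then have qX: "X < q" using q by simp
    have cv: "convex_on {X..XS} p" by (rule convex_on_subset[OF assms(6)]) (use X0 in auto)
    have "p q \<le> (p XS - p X) / (XS - X) * (q - X) + p X"
      using convex_onD_Icc'[OF cv, of q] q by simp
    then have "p q \<le> sl * (q - X) + P" unfolding sl_def P_def PS_def .
    then show ?thesis using p0b[OF qX] by simp
  qed
  have p0_ge: "PS \<le> p0 q" if q: "q \<le> XS" for q
  proof (cases "q \<le> X")
    case True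
    have "0 \<le> dl * (q - X)" using True dlnp by (simp add: mult_nonpos_nonpos)
    then show ?thesis using p0a[OF True] PSleP by simp
  next
    case False
    have "sl * (XS - X) \<le> sl * (q - X)" using sl q by (simp add: mult_left_mono_neg)
    then show ?thesis using p0b[of q] False slXS by simp
  qed
  have p0_le: "p0 q \<le> PS" if q: "XS \<le> q" for q
  proof -
    have qX: "X < q" using q XXS by simp
    have "sl * (q - X) \<le> sl * (XS - X)" using sl q by (simp add: mult_left_mono_neg)
    then show ?thesis using p0b[OF qX] slXS PS0 by simp
  qed
  have p0c: "continuous_on UNIV p0" unfolding p0_def using pm_cont P0 P_def by simp
  have intg0: "\<And>a b. p0 integrable_on {a..b}"
    by (rule integrable_continuous_real, rule continuous_on_subset[OF p0c]) auto
  have W0opt: "welfare N C p0 y \<le> welfare N C p0 xS" if y: "nonneg_vec N y" for y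
  proof -
    define Y where "Y = total N y"
    have ynn: "\<And>n. n < N \<Longrightarrow> 0 \<le> y n" using y unfolding nonneg_vec_def by auto
    have Y0: "0 \<le> Y" unfolding Y_def total_def by (rule sum_nonneg) (simp add: ynn)
    have "(\<Sum>n<N. PS * (y n - xS n)) \<le> (\<Sum>n<N. C n (y n) - C n (xS n))"
      by (rule sum_mono) (use foc ynn in auto)
    moreover have "(\<Sum>n<N. PS * (y n - xS n)) = PS * (Y - XS)"
      unfolding Y_def XS_def total_def by (simp add: sum_distrib_left[symmetric] sum_subtractf)
    ultimately have cs: "PS * (Y - XS) \<le> (\<Sum>n<N. C n (y n)) - (\<Sum>n<N. C n (xS n))"
      by (simp add: sum_subtractf)
    have ints: "integral {0..Y} p0 - integral {0..XS} p0 \<le> PS * (Y - XS)"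
    proof (cases "XS \<le> Y")
      case True
      have "integral {0..XS} p0 + integral {XS..Y} p0 = integral {0..Y} p0"
        by (rule Henstock_Kurzweil_Integration.integral_combine) (use True XS0 intg0 in auto)
      moreover have "integral {XS..Y} p0 \<le> integral {XS..Y} (\<lambda>_. PS)"
        by (rule integral_le) (use intg0 p0_le in auto)
      ultimately show ?thesis using True by (simp add: mult.commute)
    next
      case False
      have "integral {0..Y} p0 + integral {Y..XS} p0 = integral {0..XS} p0"
        by (rule Henstock_Kurzweil_Integration.integral_combine) (use False Y0 intg0 in auto)
      moreover have "integral {Y..XS} (\<lambda>_. PS) \<le> integral {Y..XS} p0"
        by (rule integral_le) (use intg0 p0_ge in auto)
      ultimately show ?thesis using False by (simp add: algebra_simps)
    qed
    show ?thesis unfolding welfare_def Y_def[symmetric] XS_def[symmetric] using cs ints by linarith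
  qed
  have so0: "social_optimum N C p0 xS"
    unfolding social_optimum_def using so(1) W0opt by auto
  have Wopt: "opt_welfare N C p = welfare N C p xS"
    unfolding opt_welfare_def by (rule cSup_eq_maximum) (use so in auto)
  have W0opt': "opt_welfare N C p0 = welfare N C p0 xS"
    unfolding opt_welfare_def by (rule cSup_eq_maximum) (use so(1) W0opt in auto)
  have zv: "nonneg_vec N (\<lambda>_. 0)" unfolding nonneg_vec_def by simp
  have W0S: "0 \<le> welfare N C p0 xS" using W0opt[OF zv] welfare_zero[of N C p0] C0 by simp
  have Cx: "C n (x n) \<le> x n * P" if n: "n < N" for n
  proof (cases "x n = 0")
    case True then show ?thesis using C0[OF n] by simp
  next
    case False
    then have xn: "0 < x n" using xnn[OF n] by simp
    have "rderiv (C n) (x n) * (0 - x n) \<le> C n 0 - C n (x n)" using ctan[OF n xn, of 0] by simp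
    then have "C n (x n) \<le> rderiv (C n) (x n) * x n" using C0[OF n] by simp
    also have "\<dots> \<le> P * x n" using DleP[OF n xn] xn by (simp add: mult_right_mono)
    finally show ?thesis by (simp add: mult.commute)
  qed
  have "(\<Sum>n<N. C n (x n)) \<le> (\<Sum>n<N. x n * P)" by (rule sum_mono) (use Cx in auto)
  also have "\<dots> = X * P" unfolding X_def total_def by (simp add: sum_distrib_right)
  also have "\<dots> \<le> integral {0..X} p"
  proof -
    have "integral {0..X} (\<lambda>_. P) \<le> integral {0..X} p"
      by (rule integral_le) (use intg X0 in \<open>auto simp: P_def intro: pmono\<close>)
    then show ?thesis using X0 by simp
  qed
  finally have Wx: "0 \<le> welfare N C p x" unfolding welfare_def X_def by simp
  have WxS: "welfare N C p x \<le> welfare N C p xS"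
    by (rule so(2)) (use xnn in \<open>auto simp: nonneg_vec_def\<close>)
  define A where "A = integral {0..X} p - integral {0..X} p0"
  define B where "B = integral {X..XS} p0 - integral {X..XS} p"
  have A: "0 \<le> A" unfolding A_def
    using integral_le[of p0 "{0..X}" p] intg0 intg[of 0 X] p0_le_p by auto
  have B: "0 \<le> B" unfolding B_def
    using integral_le[of p "{X..XS}" p0] intg0 intg[OF X0, of XS] p_le_p0 by auto
  have sp: "integral {0..X} p + integral {X..XS} p = integral {0..XS} p"
    by (rule Henstock_Kurzweil_Integration.integral_combine) (use X0 XXS intg in auto)
  have sp0: "integral {0..X} p0 + integral {X..XS} p0 = integral {0..XS} p0"
    by (rule Henstock_Kurzweil_Integration.integral_combine) (use X0 XXS intg0 in auto)
  have e1: "welfare N C p0 x = welfare N C p x - A"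
    unfolding welfare_def A_def X_def by simp
  have e2: "welfare N C p0 xS = welfare N C p xS - A + B"
    unfolding welfare_def A_def B_def XS_def[symmetric] using sp sp0 by simp
  have "efficiency N C p0 x \<le> efficiency N C p x"
    unfolding efficiency_def Wopt W0opt' e1 e2
    by (rule final_ineq[OF A B Wx WxS]) (use W0S e2 in simp)
  then show ?thesis using so0 unfolding p0_def X_def XS_def by simp
qed

end
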